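(* The class of data languages accepted by SAFA is not closed under homomorphism: there exist a data language $L\subseteq(\Sigma\times D)^*$ accepted by some SAFA and a homomorphism $h:(\Sigma\times D)^*\to(\Sigma\times D)^*$ such that no SAFA accepts $h(L)=\{h(w): w\in L\}$.
   Context: $D$ is a fixed countably infinite set of data values; for a finite alphabet $\Sigma$, data words are elements of $(\Sigma\times D)^*$. A homomorphism of data words is a monoid homomorphism $h:(\Sigma\times D)^*\to(\Sigma\times D)^*$, i.e. $h(\varepsilon)=\varepsilon$ and $h(uv)=h(u)h(v)$, determined by the images $h((a,d))$ of single letters. A set augmented finite automaton (SAFA) is a tuple $M=(Q,\Sigma\times D,q_0,F,H,\delta)$: $Q$ finite set of states, $q_0\in Q$ initial, $F\subseteq Q$ final, $H=\{h_1,\dots,h_m\}$ a finite collection of (names of) sets of data values, $\delta\subseteq Q\times\Sigma\times C\times OP\times Q$ with $C=\{p(h_i),\,!p(h_i)\}$, $OP=\{-\}\cup\{\mathsf{ins}(h_i)\}$. Configurations are $(q,\langle S_1,\dots,S_m\rangle)$ with $S_i\subseteq D$ finite; initially state $q_0$ and all sets empty. On reading $(a,d)$, a transition $(q,a,\alpha,op,q')$ from the current state may be taken if $\alpha=p(h_i)$ and $d\in S_i$, or $\alpha=\,!p(h_i)$ and $d\notin S_i$; then the state becomes $q'$ and if $op=\mathsf{ins}(h_j)$ the value $d$ is added to $S_j$ ($op=-$ changes nothing). A word is accepted if some run reads it entirely and ends in $F$. *)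

theory Defs
  imports Main
begin

text \<open>Data values D are modelled by the countably infinite type nat; letters of the
finite alphabet Sigma are drawn from nat as well (Sigma is an explicit finite set).
States of an automaton are a finite set of naturals; the sets h_1..h_m are indexed 0..<m.\<close>

type_synonym dword = "(nat \<times> nat) list"

datatype cond = Pmem nat | NPmem nat
datatype oper = NoOp | Ins nat

record safa =
  states :: "nat set"
  alpha  :: "nat set"
  init   :: nat
  final  :: "nat set"
  nsets  :: nat
  delta  :: "(nat \<times> nat \<times> cond \<times> oper \<times> nat) set"

fun cond_idx :: "cond \<Rightarrow> nat" where
  "cond_idx (Pmem i) = i" | "cond_idx (NPmem i) = i"

fun oper_ok :: "nat \<Rightarrow> oper \<Rightarrow> bool" where
  "oper_ok m NoOp = True" | "oper_ok m (Ins j) = (j < m)"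

definition wf_safa :: "safa \<Rightarrow> bool" where
  "wf_safa M \<longleftrightarrow> finite (states M) \<and> finite (alpha M) \<and> init M \<in> states M
     \<and> final M \<subseteq> states M
     \<and> (\<forall>(q, a, c, op, q') \<in> delta M. q \<in> states M \<and> a \<in> alpha M
           \<and> cond_idx c < nsets M \<and> oper_ok (nsets M) op \<and> q' \<in> states M)"

fun cond_holds :: "cond \<Rightarrow> nat \<Rightarrow> (nat \<Rightarrow> nat set) \<Rightarrow> bool" where
  "cond_holds (Pmem i) d S = (d \<in> S i)"
| "cond_holds (NPmem i) d S = (d \<notin> S i)"

fun apply_op :: "oper \<Rightarrow> nat \<Rightarrow> (nat \<Rightarrow> nat set) \<Rightarrow> (nat \<Rightarrow> nat set)" where
  "apply_op NoOp d S = S"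
| "apply_op (Ins j) d S = S(j := insert d (S j))"

type_synonym config = "nat \<times> (nat \<Rightarrow> nat set)"

definition step :: "safa \<Rightarrow> config \<Rightarrow> nat \<times> nat \<Rightarrow> config \<Rightarrow> bool" where
  "step M c x c' \<longleftrightarrow> (\<exists>\<alpha> op. (fst c, fst x, \<alpha>, op, fst c') \<in> delta M
      \<and> cond_holds \<alpha> (snd x) (snd c) \<and> snd c' = apply_op op (snd x) (snd c))"

inductive run :: "safa \<Rightarrow> config \<Rightarrow> dword \<Rightarrow> config \<Rightarrow> bool" for M where
  run_nil: "run M c [] c"
| run_cons: "step M c x c' \<Longrightarrow> run M c' w c'' \<Longrightarrow> run M c (x # w) c''"

definition lang :: "safa \<Rightarrow> dword set" where
  "lang M = {w. \<exists>q S. run M (init M, \<lambda>_. {}) w (q, S) \<and> q \<in> final M}"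

definition hom :: "(nat \<times> nat \<Rightarrow> dword) \<Rightarrow> dword \<Rightarrow> dword" where
  "hom f w = concat (map f w)"

end

theory Submission
  imports Defs
begin

fun dbl :: "dword \<Rightarrow> bool" where
  "dbl [] = True"
| "dbl [x] = False"
| "dbl (x # y # r) = (x = y \<and> dbl r)"

definition ff :: "nat \<times> nat \<Rightarrow> dword" where
  "ff x = [x, x]"

lemma dbl_hom: "dbl (hom ff w)"
  by (induction w) (auto simp: hom_def ff_def)

definition DD :: "nat \<Rightarrow> nat \<Rightarrow> dword" where
  "DD b n = hom ff (map (\<lambda>i. (0, i)) [b..<b+n])"

lemma DD_Suc: "DD b (Suc n) = (0,b) # (0,b) # DD (Suc b) n"
  unfolding DD_def hom_def ff_def
  by (simp add: upt_conv_Cons)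

lemma DD_data: "snd ` set (DD b n) = {b..<b+n}"
proof -
  have "set (DD b n) = (\<lambda>i. (0, i)) ` {b..<b+n}"
    unfolding DD_def hom_def ff_def by auto
  then show ?thesis by (simp add: image_image)
qed

lemma agree_run:
  assumes "run M c w c'"
  shows "(\<forall>j. \<forall>d \<in> snd ` set w. d \<in> snd c j \<longleftrightarrow> d \<in> T j) \<Longrightarrow>
     \<exists>T'. run M (fst c, T) w (fst c', T')"
  using assms
proof (induction arbitrary: T rule: run.induct)
  case (run_nil c)
  then show ?case by (auto intro: run.run_nil)
next
  case (run_cons c x c' w c'')
  from run_cons.hyps(1) obtain \<alpha> op where
    d: "(fst c, fst x, \<alpha>, op, fst c') \<in> delta M" and
    ch: "cond_holds \<alpha> (snd x) (snd c)" and s: "snd c' = apply_op op (snd x) (snd c)"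
    unfolding step_def by blast
  have ag: "\<forall>j. (snd x \<in> snd c j) = (snd x \<in> T j)" using run_cons.prems by auto
  have ch': "cond_holds \<alpha> (snd x) T" using ch ag by (cases \<alpha>) auto
  define T1 where "T1 = apply_op op (snd x) T"
  have ag1: "\<forall>j. \<forall>d \<in> snd ` set w. d \<in> snd c' j \<longleftrightarrow> d \<in> T1 j"
  proof (intro allI ballI)
    fix j d assume "d \<in> snd ` set w"
    hence "d \<in> snd ` set (x # w)" by auto
    hence h: "\<And>i. d \<in> snd c i \<longleftrightarrow> d \<in> T i" using run_cons.prems by blast
    show "d \<in> snd c' j \<longleftrightarrow> d \<in> T1 j"
      unfolding s T1_def using h by (cases op) auto
  qed
  obtain T' where r: "run M (fst c', T1) w (fst c'', T')" using run_cons.IH[OF ag1] by blast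
  have "step M (fst c, T) x (fst c', T1)"
    unfolding step_def T1_def using d ch' by auto
  then show ?case using r by (auto intro: run.run_cons)
qed

lemma apply_op_mono: "S j \<subseteq> apply_op op d S j"
  by (cases op) auto

lemma apply_op_sub: "(\<And>i. S i \<subseteq> A) \<Longrightarrow> d \<in> A \<Longrightarrow> apply_op op d S j \<subseteq> A"
  by (cases op) auto

lemma subst_head:
  assumes d: "(q1, 0, \<alpha>, op, q2) \<in> delta M"
    and r: "run M (q2, apply_op op x S1) rr (q', S')"
    and ch: "cond_holds \<alpha> y S1"
    and nx: "x \<notin> snd ` set rr" and ny: "y \<notin> snd ` set rr"
  shows "\<exists>S''. run M (q1, S1) ((0, y) # rr) (q', S'')"
proof -
  have ag: "\<forall>j. \<forall>e \<in> snd ` set rr. e \<in> apply_op op x S1 j \<longleftrightarrow> e \<in> apply_op op y S1 j"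
    using nx ny by (cases op) auto
  obtain T' where r2: "run M (q2, apply_op op y S1) rr (q', T')"
    using agree_run[OF r, of "apply_op op y S1"] ag by auto
  have "step M (q1, S1) (0, y) (q2, apply_op op y S1)"
    unfolding step_def using d ch by auto
  then show ?thesis using r2 by (auto intro: run.run_cons)
qed

lemma run_consE:
  assumes "run M c (x # w) c''"
  obtains c' where "step M c x c'" "run M c' w c''"
  using assms by (cases rule: run.cases) auto

lemma main:
  assumes wf: "wf_safa M"
  shows "run M (q, S) (DD b n) (q', S') \<Longrightarrow> (\<forall>j. S j \<subseteq> {..<b}) \<Longrightarrow>
    card {j. j < nsets M \<and> S j \<noteq> {}} + n > nsets M \<Longrightarrow>
    \<exists>w S''. run M (q, S) w (q', S'') \<and> \<not> dbl w"
proof (induction n arbitrary: b q S)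
  case 0
  have "card {j. j < nsets M \<and> S j \<noteq> {}} \<le> card {..<nsets M}"
    by (rule card_mono) auto
  then show ?case using 0 by simp
next
  case (Suc n b q S)
  from Suc.prems(1) obtain c1 c2 where
    s1: "step M (q, S) (0, b) c1" and s2: "step M c1 (0, b) c2"
    and r: "run M c2 (DD (Suc b) n) (q', S')"
    using Suc.prems(1) unfolding DD_Suc by (blast elim: run_consE)
  obtain q1 S1 where c1: "c1 = (q1, S1)" by (cases c1)
  obtain q2 S2 where c2: "c2 = (q2, S2)" by (cases c2)
  from s1 obtain \<alpha>1 op1 where d1: "(q, 0, \<alpha>1, op1, q1) \<in> delta M"
    and ch1: "cond_holds \<alpha>1 b S" and S1: "S1 = apply_op op1 b S"
    unfolding step_def c1 by auto
  from s2 obtain \<alpha> op where d: "(q1, 0, \<alpha>, op, q2) \<in> delta M"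
    and ch: "cond_holds \<alpha> b S1" and S2: "S2 = apply_op op b S1"
    unfolding step_def c1 c2 by auto
  have st1: "step M (q, S) (0, b) (q1, S1)" using s1 c1 by simp
  have data: "snd ` set (DD (Suc b) n) = {Suc b..<Suc b + n}" by (rule DD_data)
  have S0sub: "\<forall>j. S j \<subseteq> {..<Suc b}"
  proof
    fix j
    have "S j \<subseteq> {..<b}" using Suc.prems(2) by blast
    also have "{..<b} \<subseteq> {..<Suc b}" by auto
    finally show "S j \<subseteq> {..<Suc b}" .
  qed
  have S1sub: "\<forall>j. S1 j \<subseteq> {..<Suc b}" unfolding S1
    by (intro allI apply_op_sub) (use S0sub in auto)
  show ?case
  proof (cases \<alpha>)
    case (NPmem k)
    define F where "F = Suc (Suc (b + n))"
    have "F \<notin> S1 k"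
    proof
      assume "F \<in> S1 k"
      hence "F < Suc b" using S1sub by auto
      thus False unfolding F_def by simp
    qed
    hence chF: "cond_holds \<alpha> F S1" using NPmem by simp
    obtain S'' where rr: "run M (q1, S1) ((0, F) # DD (Suc b) n) (q', S'')"
      using subst_head[OF d r[unfolded c2 S2] chF] data unfolding F_def by auto
    have "run M (q, S) ((0,b) # (0, F) # DD (Suc b) n) (q', S'')"
      using st1 rr by (auto intro: run.run_cons)
    moreover have "\<not> dbl ((0,b) # (0, F) # DD (Suc b) n)" unfolding F_def by simp
    ultimately show ?thesis by blast
  next
    case (Pmem k)
    show ?thesis
    proof (cases "S k = {}")
      case False
      then obtain e where e: "e \<in> S k" by auto
      have eb: "e < b" using e Suc.prems(2) by auto
      have "e \<in> S1 k" using e apply_op_mono S1 by blast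
      hence chF: "cond_holds \<alpha> e S1" using Pmem by simp
      obtain S'' where rr: "run M (q1, S1) ((0, e) # DD (Suc b) n) (q', S'')"
        using subst_head[OF d r[unfolded c2 S2] chF] data eb by auto
      have "run M (q, S) ((0,b) # (0, e) # DD (Suc b) n) (q', S'')"
        using st1 rr by (auto intro: run.run_cons)
      moreover have "\<not> dbl ((0,b) # (0, e) # DD (Suc b) n)" using eb by simp
      ultimately show ?thesis by blast
    next
      case True
      have bk: "b \<in> S1 k" using ch Pmem by simp
      have km: "k < nsets M" using d wf Pmem unfolding wf_safa_def by fastforce
      have S2sub: "\<forall>j. S2 j \<subseteq> {..<Suc b}" unfolding S2
        by (intro allI apply_op_sub) (use S1sub in auto)
      have mono: "\<forall>j. S j \<subseteq> S2 j" using apply_op_mono S1 S2 by blast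
      have bk2: "b \<in> S2 k" using bk apply_op_mono S2 by blast
      have sub: "insert k {j. j < nsets M \<and> S j \<noteq> {}} \<subseteq> {j. j < nsets M \<and> S2 j \<noteq> {}}"
        using mono km bk2 by blast
      have "card (insert k {j. j < nsets M \<and> S j \<noteq> {}}) \<le> card {j. j < nsets M \<and> S2 j \<noteq> {}}"
        by (rule card_mono[OF _ sub]) auto
      moreover have "card (insert k {j. j < nsets M \<and> S j \<noteq> {}}) = Suc (card {j. j < nsets M \<and> S j \<noteq> {}})"
        using True by (subst card_insert_disjoint) auto
      ultimately have cnt: "card {j. j < nsets M \<and> S2 j \<noteq> {}} + n > nsets M"
        using Suc.prems(3) by simp
      obtain w S'' where w: "run M (q2, S2) w (q', S'')" "\<not> dbl w"
        using Suc.IH[OF r[unfolded c2] S2sub cnt] by blast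
      have st2: "step M (q1, S1) (0, b) (q2, S2)" using s2 c1 c2 by simp
      have "run M (q, S) ((0,b) # (0, b) # w) (q', S'')"
        using st1 st2 w(1) by (auto intro: run.run_cons)
      moreover have "\<not> dbl ((0,b) # (0, b) # w)" using w(2) by simp
      ultimately show ?thesis by blast
    qed
  qed
qed

definition M0 :: safa where
  "M0 = \<lparr>states = {0}, alpha = {0}, init = 0, final = {0}, nsets = 1,
         delta = {(0,0,Pmem 0,NoOp,0), (0,0,NPmem 0,NoOp,0)}\<rparr>"

lemma M0_run: "run M0 (0, S) (map (\<lambda>i. (0, i)) xs) (0, S)"
proof (induction xs)
  case Nil
  then show ?case by (auto intro: run.run_nil)
next
  case (Cons x xs)
  have "step M0 (0, S) (0, x) (0, S)"
  proof (cases "x \<in> S 0")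
    case True
    then show ?thesis unfolding step_def M0_def
      by (intro exI[of _ "Pmem 0"] exI[of _ NoOp]) auto
  next
    case False
    then show ?thesis unfolding step_def M0_def
      by (intro exI[of _ "NPmem 0"] exI[of _ NoOp]) auto
  qed
  then show ?case using Cons by (auto intro: run.run_cons)
qed

theorem theorem9:
  shows "\<exists>Sigma :: nat set. finite Sigma \<and>
    (\<exists>M f. wf_safa M \<and> alpha M = Sigma
       \<and> (\<forall>a\<in>Sigma. \<forall>d. set (f (a, d)) \<subseteq> Sigma \<times> UNIV)
       \<and> \<not> (\<exists>M'. wf_safa M' \<and> alpha M' = Sigma \<and> lang M' = hom f ` lang M))"
proof (intro exI conjI)
  show "finite {0::nat}" by simp
  show "wf_safa M0" unfolding wf_safa_def M0_def by auto
  show "alpha M0 = {0}" unfolding M0_def by simp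
  show "\<forall>a\<in>{0}. \<forall>d. set (ff (a, d)) \<subseteq> {0} \<times> UNIV" unfolding ff_def by auto
  show "\<not> (\<exists>M'. wf_safa M' \<and> alpha M' = {0} \<and> lang M' = hom ff ` lang M0)"
  proof
    assume "\<exists>M'. wf_safa M' \<and> alpha M' = {0} \<and> lang M' = hom ff ` lang M0"
    then obtain M' where wf: "wf_safa M'" and L: "lang M' = hom ff ` lang M0" by blast
    define N where "N = Suc (nsets M')"
    have "map (\<lambda>i. (0, i)) [0..<0+N] \<in> lang M0"
      unfolding lang_def using M0_run by (auto simp: M0_def)
    hence "DD 0 N \<in> lang M'" unfolding L DD_def by blast
    then obtain q S where r: "run M' (init M', \<lambda>_. {}) (DD 0 N) (q, S)" and q: "q \<in> final M'"
      unfolding lang_def by blast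
    obtain w S'' where w: "run M' (init M', \<lambda>_. {}) w (q, S'')" "\<not> dbl w"
      using main[OF wf r] unfolding N_def by auto
    have "w \<in> lang M'" unfolding lang_def using w(1) q by blast
    then obtain x where "w = hom ff x" unfolding L by blast
    then show False using w(2) dbl_hom by simp
  qed
qed

end
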